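(* Let $W\subset V$ and $M\le n$. The set $W$ is a norming set for $\mathcal{B}_M$ if and only if the spectral norm of the matrix $\mathbf{B}_M(\mathbf{I}_n-\mathbf{S}_W)\mathbf{B}_M$ is strictly less than $1$. In this case the norming constant satisfies $$\|(\mathbf{S}_W\mathbf{B}_M)^{-1}\|\le\frac{1}{1-\|\mathbf{B}_M(\mathbf{I}_n-\mathbf{S}_W)\mathbf{B}_M\|}.$$
   Context: Let $G$ be a graph with vertex set $V=\{v_1,\dots,v_n\}$, symmetric non-negative weighted adjacency matrix $\mathbf{A}$, degree matrix $\mathbf{D}=\mathrm{diag}(\sum_k\mathbf{A}_{ik})$ (positive), and normalized Laplacian $\mathbf{L}=\mathbf{I}_n-\mathbf{D}^{-1/2}\mathbf{A}\mathbf{D}^{-1/2}$. Signals are vectors in $\mathcal{L}(G)\cong\mathbb{R}^n$ with euclidean norm. Fix an orthonormal eigendecomposition $\mathbf{L}=\mathbf{U}\,\mathrm{diag}(\lambda_1,\dots,\lambda_n)\mathbf{U}^\intercal$ with columns $u_1,\dots,u_n$, and let $\mathcal{B}_M=\mathrm{span}\{u_1,\dots,u_M\}$. Define the projections $\mathbf{S}_W x(v)=x(v)$ for $v\in W$ and $0$ otherwise, and $\mathbf{B}_M x=\sum_{k=1}^M(u_k^\intercal x)u_k$. $W$ is a norming set for $\mathcal{B}_M$ if $\mathbf{S}_W\mathbf{B}_M$ is injective on $\mathcal{B}_M$; then $(\mathbf{S}_W\mathbf{B}_M)^{-1}$ denotes the inverse of $\mathbf{S}_W\mathbf{B}_M|_{\mathcal{B}_M}$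 on the image $\mathbf{S}_W(\mathcal{B}_M)$, and the norming constant is $\|(\mathbf{S}_W\mathbf{B}_M)^{-1}\|=\sup_{z\in\mathbf{S}_W(\mathcal{B}_M),\|z\|\le1}\|(\mathbf{S}_W\mathbf{B}_M)^{-1}z\|$. Matrix norms are spectral norms. *)

theory Defs
  imports "HOL-Analysis.Analysis"
begin

text \<open>Vertices are the elements of a finite type 'n; signals are vectors real^'n.\<close>

definition degree_mat :: "real^'n^'n \<Rightarrow> real^'n^'n" where
  "degree_mat A = (\<chi> i j. if i = j then (\<Sum>k\<in>UNIV. A $ i $ k) else 0)"

definition deg_inv_sqrt :: "real^'n^'n \<Rightarrow> real^'n^'n" where
  "deg_inv_sqrt A = (\<chi> i j. if i = j then 1 / sqrt (\<Sum>k\<in>UNIV. A $ i $ k) else 0)"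

definition norm_laplacian :: "real^'n^'n \<Rightarrow> real^'n^'n" where
  "norm_laplacian A = mat 1 - deg_inv_sqrt A ** A ** deg_inv_sqrt A"

text \<open>Projection onto the vertex set W (diagonal 0/1 matrix S_W).\<close>
definition S_mat :: "'n set \<Rightarrow> real^'n^'n" where
  "S_mat W = (\<chi> i j. if i = j \<and> i \<in> W then 1 else 0)"

text \<open>Orthogonal projection B_M onto span of u_0, ..., u_(M-1) (paper: u_1..u_M).\<close>
definition B_mat :: "(nat \<Rightarrow> real^'n) \<Rightarrow> nat \<Rightarrow> real^'n^'n" where
  "B_mat u M = (\<chi> i j. \<Sum>k<M. u k $ i * u k $ j)"

definition B_space :: "(nat \<Rightarrow> real^'n) \<Rightarrow> nat \<Rightarrow> (real^'n) set" where
  "B_space u M = span (u ` {..<M})"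

text \<open>Spectral norm = operator norm w.r.t. the euclidean norm.\<close>
definition spec_norm :: "real^'n^'n \<Rightarrow> real" where
  "spec_norm T = onorm (\<lambda>x. T *v x)"

definition norming_set :: "(nat \<Rightarrow> real^'n) \<Rightarrow> nat \<Rightarrow> 'n set \<Rightarrow> bool" where
  "norming_set u M W \<longleftrightarrow>
     inj_on (\<lambda>x. S_mat W *v (B_mat u M *v x)) (B_space u M)"

text \<open>Norm of the inverse of S_W B_M restricted to B_M, on the image S_W(B_M).\<close>
definition norming_const :: "(nat \<Rightarrow> real^'n) \<Rightarrow> nat \<Rightarrow> 'n set \<Rightarrow> real" where
  "norming_const u M W =
     Sup ((\<lambda>z. norm (the_inv_into (B_space u M) (\<lambda>x. S_mat W *v (B_mat u M *v x)) z))
          ` {z \<in> (\<lambda>x. S_mat W *v x) ` B_space u M. norm z \<le> 1})"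

end

theory Submission
  imports Defs
begin

lemma B_formula: "B_mat u M *v x = (\<Sum>k<M. (u k \<bullet> x) *\<^sub>R u k)"
  by (simp add: vec_eq_iff matrix_vector_mult_def B_mat_def inner_vec_def sum_component
      sum_distrib_left sum_distrib_right mult_ac sum.swap[of _ "{..<M}"])

lemma B_sym: "(B_mat u M *v x) \<bullet> y = x \<bullet> (B_mat u M *v y)"
  by (simp add: B_formula inner_sum_left inner_sum_right inner_commute mult_ac)

lemma B_in: "B_mat u M *v x \<in> B_space u M"
  unfolding B_formula B_space_def
  by (intro span_sum span_scale span_base) auto

lemma S_apply: "S_mat W *v y = (\<chi> i. if i \<in> W then y $ i else 0)"
proof -
  have "(\<Sum>j\<in>UNIV. (if i = j \<and> i \<in> W then 1 else 0) * y $ j) = (if i \<in> W then y $ i else 0)" for i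
  proof -
    have "(\<Sum>j\<in>UNIV. (if i = j \<and> i \<in> W then 1 else 0) * y $ j) = (\<Sum>j\<in>UNIV. if j = i then (if i \<in> W then y $ i else 0) else 0)"
      by (rule sum.cong) auto
    then show ?thesis by simp
  qed
  then show ?thesis by (simp add: vec_eq_iff matrix_vector_mult_def S_mat_def)
qed

lemma S_orth: "(y - S_mat W *v y) \<bullet> (S_mat W *v y) = 0"
  by (simp add: S_apply inner_vec_def, rule sum.neutral, simp)

lemma S_pyth: "norm (y - S_mat W *v y)^2 + norm (S_mat W *v y)^2 = norm y^2"
proof -
  have "norm ((y - S_mat W *v y) + S_mat W *v y)^2 = norm (y - S_mat W *v y)^2 + norm (S_mat W *v y)^2"
    by (rule norm_add_Pythagorean) (simp add: orthogonal_def S_orth)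
  then show ?thesis by simp
qed

lemma S_le: "norm (S_mat W *v y) \<le> norm y" "norm (y - S_mat W *v y) \<le> norm y"
proof -
  have "norm (S_mat W *v y)^2 \<le> norm y^2" "norm (y - S_mat W *v y)^2 \<le> norm y^2"
    using S_pyth[of y W] by (smt (verit) zero_le_power2)+
  then show "norm (S_mat W *v y) \<le> norm y" "norm (y - S_mat W *v y) \<le> norm y"
    by (auto intro: power2_le_imp_le)
qed

context
  fixes u :: "nat \<Rightarrow> real^'n" and M :: nat
  assumes orthonormal: "\<And>k l. k < CARD('n) \<Longrightarrow> l < CARD('n) \<Longrightarrow>
                         u k \<bullet> u l = (if k = l then 1 else 0)"
    and M_le: "M \<le> CARD('n)"
begin

lemma B_gen: "j < M \<Longrightarrow> B_mat u M *v u j = u j"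
proof -
  assume j: "j < M"
  have "B_mat u M *v u j = (\<Sum>k<M. if k = j then u k else 0)"
    unfolding B_formula
    by (rule sum.cong) (use j M_le orthonormal in auto)
  also have "\<dots> = u j" using j by simp
  finally show ?thesis .
qed

lemma B_fix: "x \<in> B_space u M \<Longrightarrow> B_mat u M *v x = x"
  unfolding B_space_def
proof (induction rule: span_induct)
  case step then show ?case using B_gen by auto
next
  case base
  show ?case by (simp add: subspace_def matrix_vector_right_distrib matrix_vector_mult_scaleR)
qed

lemma B_le: "norm (B_mat u M *v x) \<le> norm x"
proof -
  let ?b = "B_mat u M *v x"
  have bb: "B_mat u M *v ?b = ?b" by (rule B_fix[OF B_in])
  have "(x - ?b) \<bullet> ?b = 0"
    using B_sym[of u M x ?b] bb by (simp add: inner_diff_left)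
  then have "norm ((x - ?b) + ?b)^2 = norm (x - ?b)^2 + norm ?b^2"
    by (intro norm_add_Pythagorean) (simp add: orthogonal_def)
  then have "norm ?b ^2 \<le> norm x ^2" by simp
  then show ?thesis by (simp add: power2_le_iff_abs_le)
qed

end
theorem theorem6:
  fixes A :: "real^'n^'n" and u :: "nat \<Rightarrow> real^'n" and lam :: "nat \<Rightarrow> real"
    and W :: "'n set" and M :: nat
  assumes symA: "transpose A = A"
    and nonneg: "\<And>i j. A $ i $ j \<ge> 0"
    and degpos: "\<And>i. (\<Sum>k\<in>UNIV. A $ i $ k) > 0"
    and orthonormal: "\<And>k l. k < CARD('n) \<Longrightarrow> l < CARD('n) \<Longrightarrow>
                         u k \<bullet> u l = (if k = l then 1 else 0)"
    and eigen: "\<And>k. k < CARD('n) \<Longrightarrow> norm_laplacian A *v u k = lam k *\<^sub>R u k"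
    and M_le: "M \<le> CARD('n)"
  shows "(norming_set u M W \<longleftrightarrow>
           spec_norm (B_mat u M ** (mat 1 - S_mat W) ** B_mat u M) < 1)
         \<and> (norming_set u M W \<longrightarrow>
           norming_const u M W \<le>
             1 / (1 - spec_norm (B_mat u M ** (mat 1 - S_mat W) ** B_mat u M)))"
proof -
  let ?B = "B_mat u M" and ?S = "S_mat W"
  let ?T = "?B ** (mat 1 - ?S) ** ?B"
  let ?V = "B_space u M"
  let ?s = "spec_norm ?T"
  have Bfix: "x \<in> ?V \<Longrightarrow> ?B *v x = x" for x using B_fix[OF orthonormal M_le] by blast
  have Ble: "norm (?B *v x) \<le> norm x" for x using B_le[OF orthonormal M_le] by blast
  have Tapp: "?T *v x = ?B *v (?B *v x - ?S *v (?B *v x))" for x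
    by (simp add: matrix_vector_mul_assoc[symmetric] matrix_vector_mult_diff_rdistrib)
  have bl: "bounded_linear (\<lambda>x. ?T *v x)" by simp
  have Tle: "norm (?T *v x) \<le> ?s * norm x" for x
    unfolding spec_norm_def by (rule onorm[OF bl])
  have V0: "0 \<in> ?V" unfolding B_space_def by (rule span_zero)
  have Vsub: "x \<in> ?V \<Longrightarrow> y \<in> ?V \<Longrightarrow> x - y \<in> ?V" for x y
    unfolding B_space_def by (rule span_diff)
  have Vscale: "x \<in> ?V \<Longrightarrow> c *\<^sub>R x \<in> ?V" for x c
    unfolding B_space_def by (rule span_scale)
  have inj_iff: "norming_set u M W \<longleftrightarrow> (\<forall>x\<in>?V. ?S *v x = 0 \<longrightarrow> x = 0)"
  proof
    assume ns: "norming_set u M W"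
    show "\<forall>x\<in>?V. ?S *v x = 0 \<longrightarrow> x = 0"
    proof (intro ballI impI)
      fix x assume x: "x \<in> ?V" "?S *v x = 0"
      have "?S *v (?B *v x) = ?S *v (?B *v 0)" using x Bfix by simp
      then show "x = 0" using ns x V0 unfolding norming_set_def inj_on_def by blast
    qed
  next
    assume h: "\<forall>x\<in>?V. ?S *v x = 0 \<longrightarrow> x = 0"
    show "norming_set u M W" unfolding norming_set_def inj_on_def
    proof (intro ballI impI)
      fix x y assume xy: "x \<in> ?V" "y \<in> ?V" "?S *v (?B *v x) = ?S *v (?B *v y)"
      then have "?S *v (x - y) = 0" using Bfix by (simp add: matrix_vector_mult_diff_distrib)
      then have "x - y = 0" using h Vsub[OF xy(1,2)] by blast
      then show "x = y" by simp
    qed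
  qed
  have part1: "norming_set u M W \<longleftrightarrow> ?s < 1"
  proof
    assume ns: "norming_set u M W"
    then have h: "\<forall>x\<in>?V. ?S *v x = 0 \<longrightarrow> x = 0" using inj_iff by blast
    let ?K = "?V \<inter> sphere 0 1"
    show "?s < 1"
    proof (cases "?K = {}")
      case True
      have "?B *v x = 0" for x
      proof (rule ccontr)
        assume nz: "?B *v x \<noteq> 0"
        have "(1 / norm (?B *v x)) *\<^sub>R (?B *v x) \<in> ?K"
          using nz Vscale[OF B_in] by auto
        then show False using True by blast
      qed
      then have "norm (?T *v x) \<le> 0 * norm x" for x by (simp add: Tapp)
      then have "?s \<le> 0" unfolding spec_norm_def by (rule onorm_le)
      then show ?thesis by simp
    next
      case False
      have cV: "closed ?V" unfolding B_space_def by (rule closed_subspace) (rule subspace_span)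
      have "compact ?K" using compact_Int_closed[OF compact_sphere cV, of 0 1] by (simp add: Int_commute)
      moreover have "continuous_on ?K (\<lambda>x. norm (?S *v x))"
        by (intro continuous_intros)
      ultimately obtain x0 where x0: "x0 \<in> ?K" and mn: "\<And>y. y \<in> ?K \<Longrightarrow> norm (?S *v x0) \<le> norm (?S *v y)"
        using continuous_attains_inf[OF _ False] by blast
      define c where "c = norm (?S *v x0)"
      have "x0 \<noteq> 0" using x0 by auto
      then have "?S *v x0 \<noteq> 0" using h x0 by blast
      then have cpos: "c > 0" unfolding c_def by simp
      have key: "c * norm y \<le> norm (?S *v y)" if y: "y \<in> ?V" for y
      proof (cases "y = 0")
        case True then show ?thesis by simp
      next
        case False
        have "(1 / norm y) *\<^sub>R y \<in> ?K" using False Vscale[OF y] by auto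
        then have "c \<le> norm (?S *v ((1 / norm y) *\<^sub>R y))" unfolding c_def by (rule mn)
        also have "\<dots> = norm (?S *v y) / norm y" by (simp add: matrix_vector_mult_scaleR)
        finally show ?thesis using False by (simp add: field_simps)
      qed
      have "c \<le> 1" using S_le(1)[of W x0] x0 unfolding c_def by simp
      then have c1: "0 \<le> 1 - c^2" using cpos by (simp add: power_le_one)
      have bnd: "norm (?T *v x) \<le> sqrt (1 - c^2) * norm x" for x
      proof -
        let ?y = "?B *v x"
        have y: "?y \<in> ?V" by (rule B_in)
        have a: "norm (?T *v x) \<le> norm (?y - ?S *v ?y)" unfolding Tapp by (rule Ble)
        have b: "norm (?y - ?S *v ?y)^2 = norm ?y^2 - norm (?S *v ?y)^2" using S_pyth[of ?y W] by simp
        have "(c * norm ?y)^2 \<le> norm (?S *v ?y)^2"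
          using key[OF y] cpos by (intro power_mono) auto
        then have "norm (?y - ?S *v ?y)^2 \<le> (1 - c^2) * norm ?y^2" using b by (simp add: power_mult_distrib algebra_simps)
        also have "\<dots> \<le> (1 - c^2) * norm x^2"
        proof (rule mult_left_mono)
          show "norm ?y^2 \<le> norm x^2" using Ble[of x] by (intro power_mono) auto
          show "0 \<le> 1 - c^2" by (rule c1)
        qed
        also have "\<dots> = (sqrt (1 - c^2) * norm x)^2" using c1 by (simp add: power_mult_distrib)
        finally have "norm (?y - ?S *v ?y) \<le> sqrt (1 - c^2) * norm x"
          by (rule power2_le_imp_le) (use c1 in simp)
        then show ?thesis using a by linarith
      qed
      have "?s \<le> sqrt (1 - c^2)" unfolding spec_norm_def by (rule onorm_le) (rule bnd)
      moreover have "sqrt (1 - c^2) < 1" using cpos by simp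
      ultimately show ?thesis by linarith
    qed
  next
    assume s1: "?s < 1"
    have "\<forall>x\<in>?V. ?S *v x = 0 \<longrightarrow> x = 0"
    proof (intro ballI impI, rule ccontr)
      fix z assume z: "z \<in> ?V" "?S *v z = 0" "z \<noteq> 0"
      have "?T *v z = z" using z Bfix by (simp add: Tapp)
      then have "norm z \<le> ?s * norm z" using Tle[of z] by simp
      moreover have "norm z > 0" using z(3) by simp
      ultimately show False using s1 by (smt (verit) mult_less_cancel_right2)
    qed
    then show "norming_set u M W" using inj_iff by blast
  qed
  have part2: "norming_const u M W \<le> 1 / (1 - ?s)" if ns: "norming_set u M W"
  proof -
    have s1: "?s < 1" using ns part1 by blast
    let ?f = "\<lambda>x. ?S *v (?B *v x)"
    let ?Z = "{z \<in> (\<lambda>x. ?S *v x) ` ?V. norm z \<le> 1}"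
    have "0 \<in> ?Z" using V0 by force
    moreover have "norm (the_inv_into ?V ?f z) \<le> 1 / (1 - ?s)" if z: "z \<in> ?Z" for z
    proof -
      obtain x where x: "x \<in> ?V" "z = ?S *v x" "norm z \<le> 1" using z by blast
      have fx: "?f x = z" using x Bfix by simp
      have inv: "the_inv_into ?V ?f z = x"
        using the_inv_into_f_f[of ?f ?V x] ns x(1) fx unfolding norming_set_def by simp
      have "?T *v x = x - ?B *v z" using x Bfix by (simp add: Tapp matrix_vector_mult_diff_distrib)
      then have "x = ?T *v x + ?B *v z" by simp
      then have "norm x \<le> norm (?T *v x) + norm (?B *v z)" by (metis norm_triangle_ineq)
      also have "\<dots> \<le> ?s * norm x + 1" using Tle[of x] Ble[of z] x(3) by linarith
      finally have "(1 - ?s) * norm x \<le> 1" by (simp add: algebra_simps)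
      then have "norm x \<le> 1 / (1 - ?s)" using s1 by (simp add: field_simps)
      then show ?thesis using inv by simp
    qed
    ultimately show ?thesis unfolding norming_const_def
      by (intro cSup_least) blast+
  qed
  show ?thesis using part1 part2 by blast
qed

end
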